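(* $1$-occurrence TAP is solvable exactly in polynomial time.
   Context: Target Approximation Problem (TAP): the input is a groundset $U=\{1,\dots,n\}$ of features, a target $T\subseteq U$, and a collection $S=\{E_1,\dots,E_m\}$ of exemplars, each $E_j\subseteq U$. Features in $U\cap T$ are blue, features in $U\setminus T$ are red. A feature appears in $S'\subseteq S$ if it lies in $\bigcup_{E\in S'}E$. The margin of $S'$ is (number of blue features appearing in $S'$) minus (number of red features appearing in $S'$); TAP asks for $S'$ of maximum margin. It is assumed that every feature appears in at least one exemplar and that $T$ and all exemplars are nonempty. $k$-occurrence TAP is TAP restricted to instances in which every feature belongs to at most $k$ exemplars. *)

theory Defs
  imports Main
begin

text \<open>An instance is given by the size n of the groundset U = {1..n}, the target T
(as a list of features) and the exemplars E_0, ..., E_(m-1) (as a list of lists of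
features; exemplar j is the set of elements of the j-th list).  A subcollection of
exemplars is represented by a set J of indices.\<close>

definition tap_instance :: "nat \<Rightarrow> nat list \<Rightarrow> nat list list \<Rightarrow> bool" where
  "tap_instance n T Es \<longleftrightarrow>
     set T \<subseteq> {1..n} \<and> set T \<noteq> {} \<and>
     (\<forall>j < length Es. set (Es ! j) \<noteq> {} \<and> set (Es ! j) \<subseteq> {1..n}) \<and>
     {1..n} \<subseteq> (\<Union>j<length Es. set (Es ! j))"

definition occurrence_bounded :: "nat \<Rightarrow> nat list list \<Rightarrow> bool" where
  "occurrence_bounded k Es \<longleftrightarrow> (\<forall>u. card {j. j < length Es \<and> u \<in> set (Es ! j)} \<le> k)"

definition margin :: "nat list \<Rightarrow> nat list list \<Rightarrow> nat set \<Rightarrow> int" where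
  "margin T Es J =
     int (card ((\<Union>j\<in>J. set (Es ! j)) \<inter> set T)) - int (card ((\<Union>j\<in>J. set (Es ! j)) - set T))"

definition tap_optimal :: "nat list \<Rightarrow> nat list list \<Rightarrow> nat set \<Rightarrow> bool" where
  "tap_optimal T Es J \<longleftrightarrow> J \<subseteq> {..<length Es} \<and>
     (\<forall>J' \<subseteq> {..<length Es}. margin T Es J' \<le> margin T Es J)"

definition tap_size :: "nat \<Rightarrow> nat list \<Rightarrow> nat list list \<Rightarrow> nat" where
  "tap_size n T Es = n + length T + length Es + sum_list (map length Es)"

fun mem :: "nat \<Rightarrow> nat list \<Rightarrow> bool" where
  "mem x [] = False"
| "mem x (y # ys) = (if x = y then True else mem x ys)"

fun dedup :: "nat list \<Rightarrow> nat list" where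
  "dedup [] = []"
| "dedup (x # xs) = (if mem x xs then dedup xs else x # dedup xs)"

fun count_blue :: "nat list \<Rightarrow> nat list \<Rightarrow> nat" where
  "count_blue T [] = 0"
| "count_blue T (x # xs) = (if mem x T then Suc (count_blue T xs) else count_blue T xs)"

fun count_red :: "nat list \<Rightarrow> nat list \<Rightarrow> nat" where
  "count_red T [] = 0"
| "count_red T (x # xs) = (if mem x T then count_red T xs else Suc (count_red T xs))"

fun select :: "nat list \<Rightarrow> nat \<Rightarrow> nat list list \<Rightarrow> nat list" where
  "select T i [] = []"
| "select T i (E # Es) =
     (let D = dedup E in
      if count_red T D < count_blue T D then i # select T (Suc i) Es else select T (Suc i) Es)"

definition tap1 :: "nat list \<Rightarrow> nat list list \<Rightarrow> nat list" where
  "tap1 T Es = select T 0 Es"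

text \<open>Step-counting time functions, written by hand following the conventions of the
time_fun command of HOL-Library (Time_Commands): each function call costs 1 plus the cost
of the calls it makes; primitive operations (equality test, Suc, comparison of nat,
list constructors, let) cost nothing.\<close>

fun T_mem :: "nat \<Rightarrow> nat list \<Rightarrow> nat" where
  "T_mem x [] = 1"
| "T_mem x (y # ys) = (if x = y then 0 else T_mem x ys) + 1"

fun T_dedup :: "nat list \<Rightarrow> nat" where
  "T_dedup [] = 1"
| "T_dedup (x # xs) = T_mem x xs + T_dedup xs + 1"

fun T_count_blue :: "nat list \<Rightarrow> nat list \<Rightarrow> nat" where
  "T_count_blue T [] = 1"
| "T_count_blue T (x # xs) = T_mem x T + T_count_blue T xs + 1"

fun T_count_red :: "nat list \<Rightarrow> nat list \<Rightarrow> nat" where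
  "T_count_red T [] = 1"
| "T_count_red T (x # xs) = T_mem x T + T_count_red T xs + 1"

fun T_select :: "nat list \<Rightarrow> nat \<Rightarrow> nat list list \<Rightarrow> nat" where
  "T_select T i [] = 1"
| "T_select T i (E # Es) =
     (let D = dedup E in
      T_dedup E + T_count_red T D + T_count_blue T D + T_select T (Suc i) Es + 1)"

definition T_tap1 :: "nat list \<Rightarrow> nat list list \<Rightarrow> nat" where
  "T_tap1 T Es = T_select T 0 Es + 1"

end

theory Submission
  imports Defs
begin

lemma mem_iff[simp]: "mem x xs = (x \<in> set xs)"
  by (induction xs) auto

lemma set_dedup[simp]: "set (dedup xs) = set xs"
  by (induction xs) auto

lemma distinct_dedup: "distinct (dedup xs)"
  by (induction xs) auto

lemma length_dedup: "length (dedup xs) \<le> length xs"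
  by (induction xs) auto

lemma count_blue_card: "distinct D \<Longrightarrow> count_blue T D = card (set D \<inter> set T)"
proof (induction D)
  case (Cons x D)
  then show ?case
    by (cases "x \<in> set T") auto
qed simp

lemma count_red_card: "distinct D \<Longrightarrow> count_red T D = card (set D - set T)"
proof (induction D)
  case (Cons x D)
  then show ?case
    by (cases "x \<in> set T") (auto simp: insert_Diff_if)
qed simp

definition val :: "nat list \<Rightarrow> nat list \<Rightarrow> int" where
  "val T E = int (card (set E \<inter> set T)) - int (card (set E - set T))"

lemma set_select:
  "set (select T i Es) = {i + j | j. j < length Es \<and> val T (Es ! j) > 0}"
proof (induction Es arbitrary: i)
  case Nil
  then show ?case by simp
next
  case (Cons E Es)
  have c: "(count_red T (dedup E) < count_blue T (dedup E)) = (val T E > 0)"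
    by (simp add: count_red_card count_blue_card distinct_dedup val_def)
  have "{i + j | j. j < length (E # Es) \<and> val T ((E # Es) ! j) > 0}
      = (if val T E > 0 then {i} else {}) \<union> {Suc i + j | j. j < length Es \<and> val T (Es ! j) > 0}"
    (is "?L = ?R")
  proof
    show "?L \<subseteq> ?R"
    proof
      fix x assume "x \<in> ?L"
      then obtain j where j: "x = i + j" "j < Suc (length Es)" "val T ((E # Es) ! j) > 0" by auto
      show "x \<in> ?R"
      proof (cases j)
        case 0 then show ?thesis using j by auto
      next
        case (Suc k) then show ?thesis using j by auto
      qed
    qed
  next
    show "?R \<subseteq> ?L"
    proof
      fix x assume "x \<in> ?R"
      then consider "val T E > 0" "x = i" | j where "x = Suc i + j" "j < length Es" "val T (Es ! j) > 0"
        by (auto split: if_splits)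
      then show "x \<in> ?L"
      proof cases
        case 1 then show ?thesis by (intro CollectI exI[of _ 0]) auto
      next
        case (2 j) then show ?thesis by (intro CollectI exI[of _ "Suc j"]) auto
      qed
    qed
  qed
  then show ?case using Cons c by (auto simp: Let_def)
qed

lemma disjoint_ex:
  assumes "occurrence_bounded 1 Es" "j < length Es" "k < length Es" "j \<noteq> k"
  shows "set (Es ! j) \<inter> set (Es ! k) = {}"
proof (rule ccontr)
  assume "set (Es ! j) \<inter> set (Es ! k) \<noteq> {}"
  then obtain u where u: "u \<in> set (Es ! j)" "u \<in> set (Es ! k)" by auto
  have "{j, k} \<subseteq> {j. j < length Es \<and> u \<in> set (Es ! j)}" using u assms by auto
  hence "card {j, k} \<le> card {j. j < length Es \<and> u \<in> set (Es ! j)}"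
    by (rule card_mono[rotated]) auto
  moreover have "card {j. j < length Es \<and> u \<in> set (Es ! j)} \<le> 1"
    using assms(1) unfolding occurrence_bounded_def by blast
  ultimately show False using assms(4) by simp
qed

lemma margin_sum:
  assumes "occurrence_bounded 1 Es" "J \<subseteq> {..<length Es}"
  shows "margin T Es J = (\<Sum>j\<in>J. val T (Es ! j))"
proof -
  have fin: "finite J" using assms(2) finite_subset by blast
  have d: "\<And>j k. j \<in> J \<Longrightarrow> k \<in> J \<Longrightarrow> j \<noteq> k \<Longrightarrow> set (Es ! j) \<inter> set (Es ! k) = {}"
    using disjoint_ex[OF assms(1)] assms(2) by blast
  have e1: "(\<Union>j\<in>J. set (Es ! j)) \<inter> set T = (\<Union>j\<in>J. set (Es ! j) \<inter> set T)" by auto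
  have e2: "(\<Union>j\<in>J. set (Es ! j)) - set T = (\<Union>j\<in>J. set (Es ! j) - set T)" by auto
  have c1: "card (\<Union>j\<in>J. set (Es ! j) \<inter> set T) = (\<Sum>j\<in>J. card (set (Es ! j) \<inter> set T))"
    using fin d by (intro card_UN_disjoint) auto
  have c2: "card (\<Union>j\<in>J. set (Es ! j) - set T) = (\<Sum>j\<in>J. card (set (Es ! j) - set T))"
    using fin d by (intro card_UN_disjoint) auto
  show ?thesis
    unfolding margin_def e1 e2 c1 c2 val_def
    by (simp add: sum_subtractf)
qed

lemma correct:
  assumes "occurrence_bounded 1 Es"
  shows "tap_optimal T Es (set (tap1 T Es))"
proof -
  let ?P = "{j. j < length Es \<and> val T (Es ! j) > 0}"
  have sP: "set (tap1 T Es) = ?P" unfolding tap1_def set_select by auto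
  have Psub: "?P \<subseteq> {..<length Es}" by auto
  show ?thesis unfolding tap_optimal_def sP
  proof (intro conjI Psub allI impI)
    fix J' assume J': "J' \<subseteq> {..<length Es}"
    have fJ: "finite J'" using J' finite_subset by blast
    have "margin T Es J' = (\<Sum>j\<in>J'. val T (Es ! j))" using margin_sum[OF assms J'] .
    also have "\<dots> \<le> (\<Sum>j\<in>J' \<inter> ?P. val T (Es ! j))"
    proof -
      have "(\<Sum>j\<in>J'. val T (Es ! j)) = (\<Sum>j\<in>J' \<inter> ?P. val T (Es ! j)) + (\<Sum>j\<in>J' - ?P. val T (Es ! j))"
        using fJ by (rule sum.Int_Diff)
      moreover have "(\<Sum>j\<in>J' - ?P. val T (Es ! j)) \<le> 0"
        using J' by (intro sum_nonpos) auto
      ultimately show ?thesis by simp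
    qed
    also have "\<dots> \<le> (\<Sum>j\<in>?P. val T (Es ! j))"
      by (rule sum_mono2) auto
    also have "\<dots> = margin T Es ?P" using margin_sum[OF assms Psub] by simp
    finally show "margin T Es J' \<le> margin T Es ?P" .
  qed
qed

lemma T_mem_bound: "T_mem x ys \<le> length ys + 1"
  by (induction ys) auto

lemma T_dedup_bound: "T_dedup xs \<le> (length xs + 1) * (length xs + 1)"
proof (induction xs)
  case (Cons x xs)
  have "T_mem x xs \<le> length xs + 1" by (rule T_mem_bound)
  then show ?case using Cons by simp
qed simp

lemma T_count_blue_bound: "T_count_blue T D \<le> (length D + 1) * (length T + 2)"
proof (induction D)
  case (Cons x D)
  have "T_mem x T \<le> length T + 1" by (rule T_mem_bound)
  then show ?case using Cons by simp
qed simp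

lemma T_count_red_bound: "T_count_red T D \<le> (length D + 1) * (length T + 2)"
proof (induction D)
  case (Cons x D)
  have "T_mem x T \<le> length T + 1" by (rule T_mem_bound)
  then show ?case using Cons by simp
qed simp

lemma T_select_bound:
  assumes "length T \<le> K" "\<forall>E\<in>set Es. length E \<le> K"
  shows "T_select T i Es \<le> length Es * (3 * (K + 2) * (K + 2) + 1) + 1"
  using assms(2)
proof (induction Es arbitrary: i)
  case Nil then show ?case by simp
next
  case (Cons E Es)
  have lE: "length E \<le> K" using Cons.prems by simp
  have lD: "length (dedup E) \<le> K" using length_dedup[of E] lE by simp
  have a: "T_dedup E \<le> (K + 2) * (K + 2)"
  proof -
    have h: "length E + 1 \<le> K + 2" using lE by simp
    have "(length E + 1) * (length E + 1) \<le> (K + 2) * (K + 2)" using mult_le_mono[OF h h] .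
    thus ?thesis using T_dedup_bound[of E] by linarith
  qed
  have b: "T_count_red T (dedup E) \<le> (K + 2) * (K + 2)"
  proof -
    have "length (dedup E) + 1 \<le> K + 2" using lD by simp
    moreover have "length T + 2 \<le> K + 2" using assms(1) by simp
    ultimately have "(length (dedup E) + 1) * (length T + 2) \<le> (K + 2) * (K + 2)" by (rule mult_le_mono)
    thus ?thesis using T_count_red_bound[of T "dedup E"] by linarith
  qed
  have c: "T_count_blue T (dedup E) \<le> (K + 2) * (K + 2)"
  proof -
    have "length (dedup E) + 1 \<le> K + 2" using lD by simp
    moreover have "length T + 2 \<le> K + 2" using assms(1) by simp
    ultimately have "(length (dedup E) + 1) * (length T + 2) \<le> (K + 2) * (K + 2)" by (rule mult_le_mono)
    thus ?thesis using T_count_blue_bound[of T "dedup E"] by linarith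
  qed
  have "T_select T (Suc i) Es \<le> length Es * (3 * (K + 2) * (K + 2) + 1) + 1"
    using Cons by simp
  then show ?case using a b c by (simp add: Let_def algebra_simps)
qed

lemma poly_time:
  "T_tap1 T Es \<le> 14 * (tap_size n T Es + 1) ^ 3"
proof -
  define s where "s = tap_size n T Es"
  have lT: "length T \<le> s" unfolding s_def tap_size_def by simp
  have lEs: "length Es \<le> s" unfolding s_def tap_size_def by simp
  have lE: "\<forall>E\<in>set Es. length E \<le> s"
  proof
    fix E assume "E \<in> set Es"
    hence "length E \<le> sum_list (map length Es)"
      by (simp add: member_le_sum_list)
    thus "length E \<le> s" unfolding s_def tap_size_def by simp
  qed
  have "T_tap1 T Es \<le> length Es * (3 * (s + 2) * (s + 2) + 1) + 2"
    using T_select_bound[OF lT lE, of 0] unfolding T_tap1_def by simp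
  also have "\<dots> \<le> s * (3 * (s + 2) * (s + 2) + 1) + 2"
    using lEs by simp
  also have "\<dots> \<le> 14 * (s + 1) ^ 3"
    by (simp add: power3_eq_cube algebra_simps)
  finally show ?thesis unfolding s_def .
qed

theorem theorem7:
  shows "(\<forall>n T Es. tap_instance n T Es \<and> occurrence_bounded 1 Es \<longrightarrow>
            tap_optimal T Es (set (tap1 T Es))) \<and>
         (\<exists>c d::nat. \<forall>n T Es. tap_instance n T Es \<and> occurrence_bounded 1 Es \<longrightarrow>
            T_tap1 T Es \<le> c * (tap_size n T Es + 1) ^ d)"
  using correct poly_time by blast

end
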